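(* For every hypergraph $\mathcal{H}=(Q,\mathcal{S})$ with all hyperedges nonempty and $S_n=Q$, the graph $G'_{\mathcal{H}}$ is $(P_2+P_4)$-free.
   Context: A hypergraph $\mathcal{H}=(Q,\mathcal{S})$ has element set $Q=\{q_1,\dots,q_m\}$ and hyperedges $\mathcal{S}=\{S_1,\dots,S_n\}$, $S_j\subseteq Q$. The graph $G_{\mathcal{H}}$ has vertex set $Q\cup\mathcal{S}\cup\mathcal{S}'\cup\{t_1,t_2\}$, where $\mathcal{S}'=\{S_1',\dots,S_n'\}$ is a set of $n$ new vertices, and edges: $q_iS_j$ and $q_iS_j'$ whenever $q_i\in S_j$; $S_jS_\ell'$ for all $j,\ell$; $q_hq_i$ for all distinct $h,i$; $t_1S_j$ and $t_2S_j'$ for all $j$; no other edges. $G'_{\mathcal{H}}$ is obtained from $G_{\mathcal{H}}$ by adding the edge $t_1t_2$. $P_2+P_4$ is the disjoint union of a path on 2 and a path on 4 vertices; $H$-free means no induced subgraph isomorphic to $H$. *)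

theory Defs
  imports Main
begin

text \<open>Simple graphs are given by a vertex set and a symmetric irreflexive adjacency
relation.\<close>

definition contains_induced ::
  "'a set \<Rightarrow> ('a \<Rightarrow> 'a \<Rightarrow> bool) \<Rightarrow> 'b set \<Rightarrow> ('b \<Rightarrow> 'b \<Rightarrow> bool) \<Rightarrow> bool" where
  "contains_induced V adj W adjH \<longleftrightarrow>
     (\<exists>f. inj_on f W \<and> f ` W \<subseteq> V \<and>
          (\<forall>x\<in>W. \<forall>y\<in>W. adjH x y \<longleftrightarrow> adj (f x) (f y)))"

definition H_free ::
  "'a set \<Rightarrow> ('a \<Rightarrow> 'a \<Rightarrow> bool) \<Rightarrow> 'b set \<Rightarrow> ('b \<Rightarrow> 'b \<Rightarrow> bool) \<Rightarrow> bool" where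
  "H_free V adj W adjH \<longleftrightarrow> \<not> contains_induced V adj W adjH"

definition P2P4_V :: "nat set" where "P2P4_V = {0..5}"

definition P2P4_adj :: "nat \<Rightarrow> nat \<Rightarrow> bool" where
  "P2P4_adj x y \<longleftrightarrow> {x, y} \<in> {{0,1}, {2,3}, {3,4}, {4,5}}"

text \<open>Vertices of G_H: element vertices q, hyperedge vertices S_j, copies S'_j, t1, t2.\<close>
datatype 'a gvert = Qv 'a | Sv nat | Sv' nat | T1 | T2

text \<open>Hypergraph: element set Q, hyperedges S_1..S_n given by E :: nat => 'a set.\<close>
definition GH_V :: "'a set \<Rightarrow> nat \<Rightarrow> 'a gvert set" where
  "GH_V Q n = Qv ` Q \<union> Sv ` {1..n} \<union> Sv' ` {1..n} \<union> {T1, T2}"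

fun GH_edge :: "'a set \<Rightarrow> (nat \<Rightarrow> 'a set) \<Rightarrow> nat \<Rightarrow> 'a gvert \<Rightarrow> 'a gvert \<Rightarrow> bool" where
  "GH_edge Q E n (Qv x) (Sv j) = (x \<in> Q \<and> j \<in> {1..n} \<and> x \<in> E j)"
| "GH_edge Q E n (Qv x) (Sv' j) = (x \<in> Q \<and> j \<in> {1..n} \<and> x \<in> E j)"
| "GH_edge Q E n (Sv j) (Sv' l) = (j \<in> {1..n} \<and> l \<in> {1..n})"
| "GH_edge Q E n (Qv x) (Qv y) = (x \<in> Q \<and> y \<in> Q \<and> x \<noteq> y)"
| "GH_edge Q E n T1 (Sv j) = (j \<in> {1..n})"
| "GH_edge Q E n T2 (Sv' j) = (j \<in> {1..n})"
| "GH_edge Q E n _ _ = False"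

definition GH_adj :: "'a set \<Rightarrow> (nat \<Rightarrow> 'a set) \<Rightarrow> nat \<Rightarrow> 'a gvert \<Rightarrow> 'a gvert \<Rightarrow> bool" where
  "GH_adj Q E n u v \<longleftrightarrow> GH_edge Q E n u v \<or> GH_edge Q E n v u"

definition GH'_adj :: "'a set \<Rightarrow> (nat \<Rightarrow> 'a set) \<Rightarrow> nat \<Rightarrow> 'a gvert \<Rightarrow> 'a gvert \<Rightarrow> bool" where
  "GH'_adj Q E n u v \<longleftrightarrow> GH_adj Q E n u v \<or> {u, v} = {T1, T2}"

end

theory Submission
  imports Defs
begin

fun isQ :: "'a gvert \<Rightarrow> bool" where
  "isQ (Qv _) = True" | "isQ _ = False"

fun side :: "'a gvert \<Rightarrow> bool" where
  "side (Sv _) = True" | "side T2 = True" | "side _ = False"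

lemma side_adj:
  assumes "u \<in> GH_V Q n" "v \<in> GH_V Q n" "\<not> isQ u" "\<not> isQ v"
  shows "GH'_adj Q E n u v = (side u \<noteq> side v)"
  using assms by (cases u; cases v; auto simp: GH_V_def GH'_adj_def GH_adj_def)

lemma q_adj:
  assumes "u \<in> GH_V Q n" "v \<in> GH_V Q n" "isQ u" "isQ v" "u \<noteq> v"
  shows "GH'_adj Q E n u v"
  using assms by (cases u; cases v; auto simp: GH_V_def GH'_adj_def GH_adj_def)

theorem lemma34:
  fixes Q :: "'a set" and E :: "nat \<Rightarrow> 'a set" and n :: nat
  assumes "finite Q" and "n \<ge> 1"
    and "\<forall>j\<in>{1..n}. E j \<subseteq> Q \<and> E j \<noteq> {}"
    and "E n = Q"
  shows "H_free (GH_V Q n) (GH'_adj Q E n) P2P4_V P2P4_adj"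
proof -
  have False if inj: "inj_on f P2P4_V" and sub: "f ` P2P4_V \<subseteq> GH_V Q n"
    and ad: "\<forall>x\<in>P2P4_V. \<forall>y\<in>P2P4_V. P2P4_adj x y \<longleftrightarrow> GH'_adj Q E n (f x) (f y)" for f
  proof -
    let ?A = "GH'_adj Q E n"
    have V: "f i \<in> GH_V Q n" if "i \<le> 5" for i using sub that by (auto simp: P2P4_V_def)
    have ne: "f i \<noteq> f j" if "i \<le> 5" "j \<le> 5" "i \<noteq> j" for i j
      using inj that by (auto simp: P2P4_V_def inj_on_def)
    have adj: "P2P4_adj i j \<longleftrightarrow> ?A (f i) (f j)" if "i \<le> 5" "j \<le> 5" for i j
      using ad that by (auto simp: P2P4_V_def)
    have e01: "?A (f 0) (f 1)" using adj[of 0 1] by (simp add: P2P4_adj_def)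
    have e23: "?A (f 2) (f 3)" using adj[of 2 3] by (simp add: P2P4_adj_def)
    have e34: "?A (f 3) (f 4)" using adj[of 3 4] by (simp add: P2P4_adj_def)
    have e45: "?A (f 4) (f 5)" using adj[of 4 5] by (simp add: P2P4_adj_def)
    have n25: "\<not> ?A (f 2) (f 5)" using adj[of 2 5] by (simp add: P2P4_adj_def insert_commute doubleton_eq_iff)
    have n24: "\<not> ?A (f 2) (f 4)" using adj[of 2 4] by (simp add: P2P4_adj_def insert_commute doubleton_eq_iff)
    have nx: "\<not> ?A (f i) (f j)" if "i \<le> 1" "2 \<le> j" "j \<le> 5" for i j
    proof -
      have "\<not> P2P4_adj i j" using that unfolding P2P4_adj_def
        by (auto simp: doubleton_eq_iff)
      thus ?thesis using adj[of i j] that by simp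
    qed
    show False
    proof (cases "isQ (f 0) \<or> isQ (f 1)")
      case True
      then obtain i where i: "i \<le> 1" "isQ (f i)" by (metis le_numeral_extra(4) zero_le)
      have nq: "\<not> isQ (f j)" if "2 \<le> j" "j \<le> 5" for j
        using q_adj[OF V V i(2) _ ne, of j] nx[OF i(1) that] that i(1) by auto
      show False
        using side_adj[OF V V nq nq, of 2 3] side_adj[OF V V nq nq, of 3 4]
          side_adj[OF V V nq nq, of 4 5] side_adj[OF V V nq nq, of 2 5]
          e23 e34 e45 n25 by simp
    next
      case False
      have s01: "side (f 0) \<noteq> side (f 1)" using side_adj[of "f 0" Q n "f 1" E] V False e01 by simp
      have q: "isQ (f j)" if "2 \<le> j" "j \<le> 5" for j
      proof (rule ccontr)
        assume "\<not> isQ (f j)"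
        then show False using side_adj[of "f 0" Q n "f j" E] side_adj[of "f 1" Q n "f j" E]
          V[of 0] V[of 1] V[of j] that False s01 nx[of 0 j] nx[of 1 j] by auto
      qed
      show False using q_adj[OF V V q q ne, of 2 4] n24 by simp
    qed
  qed
  thus ?thesis unfolding H_free_def contains_induced_def by blast
qed

end
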